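(* Fix $\Sigma\in\mathcal{Q}^+_{m,n}$, indices $k,l\in\mathcal{V}_2$ with $k\ge l$, and numbers $\lambda_{hj}\ge0$ for $h,j\in\mathcal{V}_1$, $h\ge j$. Consider $$\min_{\gamma_{kl}\ge0}\ \sum_{h\ge j}\Big[\max\{\gamma_{kl},\lambda_{hj}\}q_{hk,jl}(\Sigma)-\alpha_{hk,jl}\log\max\{\lambda_{hj},\gamma_{kl}\}\Big]+\varepsilon\gamma_{kl}.$$ Let $\tilde\lambda_1<\dots<\tilde\lambda_{\tilde u_1}$ ($\tilde u_1\le m_1(m_1+1)/2$) be the distinct values among $\{\lambda_{hj}:h\ge j\}$ in increasing order, and define $\mathcal{C}_u=\{(h,j):h\ge j,\ \lambda_{hj}\le\tilde\lambda_u\}$, $\mathcal{N}_1=\{\tilde\lambda_u:u=1,\dots,\tilde u_1\}$, $\mathcal{N}_2=\{\tilde\gamma_{kl,u}:u=0,1,\dots,\tilde u_1\}$, where $\tilde\gamma_{kl,0}=0$ and, for $u>0$, $$\tilde\gamma_{kl,u}=\frac{\sum_{(h,j)\in\mathcal{C}_u}\alpha_{hk,jl}}{\sum_{(h,j)\in\mathcal{C}_u}q_{hk,jl}(\Sigma)+\varepsilon}.$$ Then this problem admits a solution and all its points of minimum lie in $\mathcal{M}_2=\mathcal{N}_1\cup\mathcal{N}_2$.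
   Context: Let $m_1,m_2,n\in\mathbb{N}$, $m=m_1m_2$, $\mathcal{V}_1=\{1,\dots,m_1\}$, $\mathcal{V}_2=\{1,\dots,m_2\}$, $\varepsilon>0$. $\mathcal{Q}^+_{m,n}$ is the set of matrix pseudo-polynomials $\Sigma(e^{i\vartheta})=S_0+\frac12\sum_{t=1}^n[S_te^{-it\vartheta}+S_t^Te^{it\vartheta}]$ ($S_0=S_0^T$, $S_t\in\mathbb{R}^{m\times m}$) with $\Sigma(e^{i\vartheta})\succ0$ for all $\vartheta\in[-\pi,\pi]$. For $M\in\mathbb{R}^{m\times m}$, $(M)_{hk,jl}$ is the entry in row $(h-1)m_2+k$ and column $(j-1)m_2+l$. $q_{hk,jl}(\Sigma)=\max_{t=0,\dots,n}\max\{|(S_t)_{hk,jl}|,|(S_t)_{hl,jk}|,|(S_t)_{jl,hk}|,|(S_t)_{jk,hl}|\}$. For $h\ge j$, $k\ge l$: $\alpha_{hk,jl}=n+1$ if $h=j,k=l$; $2n+1$ if $h=j,k>l$ or $h>j,k=l$; $4n+2$ if $h>j,k>l$. The objective is taken to be $+\infty$ if some logarithm has argument $0$. *)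

theory Defs
  imports "HOL-Analysis.Analysis" "HOL-Library.Extended_Real"
begin

text \<open>Matrix coefficients S_t (t = 0..n) of size m x m are represented as
  S :: nat => nat => nat => real, with S t a b the (a,b) entry of S_t,
  rows/columns indexed 1..m (1-based, as in the paper).\<close>

definition Sigma_val :: "(nat \<Rightarrow> nat \<Rightarrow> nat \<Rightarrow> real) \<Rightarrow> nat \<Rightarrow> real \<Rightarrow> nat \<Rightarrow> nat \<Rightarrow> complex" where
  "Sigma_val S n \<theta> a b =
     complex_of_real (S 0 a b) + (1/2) * (\<Sum>t=1..n.
        complex_of_real (S t a b) * exp (- \<i> * of_nat t * of_real \<theta>)
      + complex_of_real (S t b a) * exp (\<i> * of_nat t * of_real \<theta>))"

definition Qplus :: "nat \<Rightarrow> nat \<Rightarrow> (nat \<Rightarrow> nat \<Rightarrow> nat \<Rightarrow> real) \<Rightarrow> bool" where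
  "Qplus m n S \<longleftrightarrow>
     (\<forall>a\<in>{1..m}. \<forall>b\<in>{1..m}. S 0 a b = S 0 b a) \<and>
     (\<forall>\<theta>\<in>{-pi..pi}. \<forall>x :: nat \<Rightarrow> complex. (\<exists>a\<in>{1..m}. x a \<noteq> 0) \<longrightarrow>
        (let v = (\<Sum>a\<in>{1..m}. \<Sum>b\<in>{1..m}. cnj (x a) * Sigma_val S n \<theta> a b * x b)
         in Im v = 0 \<and> Re v > 0))"

definition blk :: "nat \<Rightarrow> (nat \<Rightarrow> nat \<Rightarrow> real) \<Rightarrow> nat \<Rightarrow> nat \<Rightarrow> nat \<Rightarrow> nat \<Rightarrow> real" where
  "blk m2 M h k j l = M ((h - 1) * m2 + k) ((j - 1) * m2 + l)"

definition qcoef :: "nat \<Rightarrow> nat \<Rightarrow> (nat \<Rightarrow> nat \<Rightarrow> nat \<Rightarrow> real) \<Rightarrow> nat \<Rightarrow> nat \<Rightarrow> nat \<Rightarrow> nat \<Rightarrow> real" where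
  "qcoef m2 n S h k j l =
     Max ((\<lambda>t. max (max \<bar>blk m2 (S t) h k j l\<bar> \<bar>blk m2 (S t) h l j k\<bar>)
                   (max \<bar>blk m2 (S t) j l h k\<bar> \<bar>blk m2 (S t) j k h l\<bar>)) ` {0..n})"

definition alpha :: "nat \<Rightarrow> nat \<Rightarrow> nat \<Rightarrow> nat \<Rightarrow> nat \<Rightarrow> real" where
  "alpha n h k j l =
     (if h = j \<and> k = l then real n + 1
      else if h = j \<or> k = l then 2 * real n + 1
      else 4 * real n + 2)"

definition pairs :: "nat \<Rightarrow> (nat \<times> nat) set" where
  "pairs m1 = {(h, j). h \<in> {1..m1} \<and> j \<in> {1..m1} \<and> j \<le> h}"

definition objective :: "nat \<Rightarrow> nat \<Rightarrow> nat \<Rightarrow> (nat \<Rightarrow> nat \<Rightarrow> nat \<Rightarrow> real) \<Rightarrow> real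
    \<Rightarrow> nat \<Rightarrow> nat \<Rightarrow> (nat \<Rightarrow> nat \<Rightarrow> real) \<Rightarrow> real \<Rightarrow> ereal" where
  "objective m1 m2 n S \<epsilon> k l lam \<gamma> =
     (if \<exists>(h, j)\<in>pairs m1. max (lam h j) \<gamma> = 0 then \<infinity>
      else ereal ((\<Sum>(h, j)\<in>pairs m1.
                     max \<gamma> (lam h j) * qcoef m2 n S h k j l
                   - alpha n h k j l * ln (max (lam h j) \<gamma>)) + \<epsilon> * \<gamma>))"

text \<open>C for threshold value v (v ranges over the distinct lambda values):
  C_u = {(h,j) : h>=j, lam h j <= lambda~_u}.\<close>
definition Cset :: "nat \<Rightarrow> (nat \<Rightarrow> nat \<Rightarrow> real) \<Rightarrow> real \<Rightarrow> (nat \<times> nat) set" where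
  "Cset m1 lam v = {(h, j) \<in> pairs m1. lam h j \<le> v}"

definition gamma_tilde :: "nat \<Rightarrow> nat \<Rightarrow> nat \<Rightarrow> (nat \<Rightarrow> nat \<Rightarrow> nat \<Rightarrow> real) \<Rightarrow> real
    \<Rightarrow> nat \<Rightarrow> nat \<Rightarrow> (nat \<Rightarrow> nat \<Rightarrow> real) \<Rightarrow> real \<Rightarrow> real" where
  "gamma_tilde m1 m2 n S \<epsilon> k l lam v =
     (\<Sum>(h, j)\<in>Cset m1 lam v. alpha n h k j l) /
     ((\<Sum>(h, j)\<in>Cset m1 lam v. qcoef m2 n S h k j l) + \<epsilon>)"

definition N1 :: "nat \<Rightarrow> (nat \<Rightarrow> nat \<Rightarrow> real) \<Rightarrow> real set" where
  "N1 m1 lam = (\<lambda>(h, j). lam h j) ` pairs m1"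

definition N2 :: "nat \<Rightarrow> nat \<Rightarrow> nat \<Rightarrow> (nat \<Rightarrow> nat \<Rightarrow> nat \<Rightarrow> real) \<Rightarrow> real
    \<Rightarrow> nat \<Rightarrow> nat \<Rightarrow> (nat \<Rightarrow> nat \<Rightarrow> real) \<Rightarrow> real set" where
  "N2 m1 m2 n S \<epsilon> k l lam = insert 0 (gamma_tilde m1 m2 n S \<epsilon> k l lam ` N1 m1 lam)"

end

theory Submission imports Defs begin

lemma hinc:
  fixes A B x y :: real
  assumes "A > 0" "B > 0" "B / A \<le> x" "x < y"
  shows "A * x - B * ln x < A * y - B * ln y"
proof -
  have x0: "x > 0" using assms by (smt (verit) divide_pos_pos)
  have y0: "y > 0" using x0 assms by simp
  have "ln y - ln x < (y - x) / x" using ln_diff_less[OF y0 x0] assms by simp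
  hence "B * (ln y - ln x) < B * ((y - x) / x)" using assms(2) by (rule mult_strict_left_mono)
  also have "B * ((y - x) / x) \<le> A * (y - x)"
  proof -
    have "B \<le> A * x" using assms by (simp add: divide_le_eq mult.commute)
    hence "B / x \<le> A" using x0 by (simp add: divide_le_eq)
    thus ?thesis using assms by (metis diff_gt_0_iff_gt less_eq_real_def mult.commute mult_right_mono times_divide_eq_left)
  qed
  finally show ?thesis by (simp add: algebra_simps)
qed

lemma hdec:
  fixes A B x y :: real
  assumes "A > 0" "B > 0" "0 < x" "x < y" "y \<le> B / A"
  shows "A * y - B * ln y < A * x - B * ln x"
proof -
  have y0: "y > 0" using assms by simp
  have "ln x - ln y < (x - y) / y" using ln_diff_less[OF assms(3) y0] assms by simp
  hence "B * ((y - x) / y) < B * (ln y - ln x)" using assms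
    by (smt (verit, ccfv_SIG) minus_divide_left mult_less_cancel_left_pos)
  moreover have "A * (y - x) \<le> B * ((y - x) / y)"
  proof -
    have "A * y \<le> B" using assms by (simp add: le_divide_eq mult.commute)
    hence "A \<le> B / y" using y0 by (simp add: le_divide_eq)
    thus ?thesis using assms by (metis diff_gt_0_iff_gt less_eq_real_def mult.commute mult_right_mono times_divide_eq_left)
  qed
  ultimately show ?thesis by (simp add: algebra_simps)
qed

lemma core:
  fixes P :: "'a set" and L Q Al :: "'a \<Rightarrow> real" and e \<gamma> :: real
    and F :: "real \<Rightarrow> ereal" and GT :: "real \<Rightarrow> real"
  assumes fin: "finite P" and L0: "\<forall>p\<in>P. L p \<ge> 0" and Q0: "\<forall>p\<in>P. Q p \<ge> 0"
    and Al0: "\<forall>p\<in>P. Al p > 0" and e0: "e > 0" and g0: "\<gamma> > 0" and gN: "\<gamma> \<notin> L ` P"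
    and Fdef: "\<And>y. F y = (if \<exists>p\<in>P. max (L p) y = 0 then \<infinity>
         else ereal ((\<Sum>p\<in>P. max y (L p) * Q p - Al p * ln (max (L p) y)) + e * y))"
    and GTdef: "\<And>v. GT v = (\<Sum>p\<in>{p\<in>P. L p \<le> v}. Al p) / ((\<Sum>p\<in>{p\<in>P. L p \<le> v}. Q p) + e)"
  shows "\<gamma> \<in> GT ` L ` P \<or> (\<exists>c \<in> L ` P \<union> insert 0 (GT ` L ` P). F c < F \<gamma>)"
proof -
  define C where "C = {p\<in>P. L p < \<gamma>}"
  define D where "D = P - C"
  define K where "K = (\<Sum>p\<in>D. L p * Q p - Al p * ln (L p))"
  define A where "A = (\<Sum>p\<in>C. Q p) + e"
  define B where "B = (\<Sum>p\<in>C. Al p)"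
  define g where "g y = A * y - B * ln y + K" for y
  have finC: "finite C" using fin C_def by simp
  have finD: "finite D" using fin D_def by simp
  have CP: "C \<subseteq> P" using C_def by auto
  have Dgt: "\<forall>p\<in>D. L p > \<gamma>" using gN unfolding D_def C_def by (auto simp: image_iff)
  have A0: "A > 0" unfolding A_def using e0 Q0 CP by (smt (verit) subsetD sum_nonneg)
  have Fg: "F y = ereal (g y)" if v1: "\<forall>p\<in>C. L p \<le> y" and v2: "\<forall>p\<in>D. y \<le> L p"
     and v3: "0 < y \<or> C = {}" and v4: "0 \<le> y" for y
  proof -
    have nz: "\<not> (\<exists>p\<in>P. max (L p) y = 0)"
    proof
      assume "\<exists>p\<in>P. max (L p) y = 0"
      then obtain p where p: "p \<in> P" "max (L p) y = 0" by blast
      show False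
      proof (cases "p \<in> C")
        case True
        then show ?thesis using v3 p by auto
      next
        case False
        then have "p \<in> D" using p D_def by auto
        then show ?thesis using Dgt g0 p by force
      qed
    qed
    have s: "(\<Sum>p\<in>P. max y (L p) * Q p - Al p * ln (max (L p) y))
        = (\<Sum>p\<in>D. max y (L p) * Q p - Al p * ln (max (L p) y))
          + (\<Sum>p\<in>C. max y (L p) * Q p - Al p * ln (max (L p) y))"
      unfolding D_def using sum.subset_diff[OF CP fin] by blast
    have sD: "(\<Sum>p\<in>D. max y (L p) * Q p - Al p * ln (max (L p) y)) = K"
      unfolding K_def by (rule sum.cong) (use v2 in \<open>auto simp: max_def\<close>)
    have "(\<Sum>p\<in>C. max y (L p) * Q p - Al p * ln (max (L p) y))
        = (\<Sum>p\<in>C. y * Q p - Al p * ln y)"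
      by (rule sum.cong) (use v1 in \<open>auto simp: max_def\<close>)
    also have "\<dots> = y * (\<Sum>p\<in>C. Q p) - B * ln y"
      unfolding B_def by (simp add: sum_subtractf sum_distrib_left sum_distrib_right)
    finally have sC: "(\<Sum>p\<in>C. max y (L p) * Q p - Al p * ln (max (L p) y))
        = y * (\<Sum>p\<in>C. Q p) - B * ln y" .
    show ?thesis using nz unfolding Fdef s sD sC g_def A_def by (simp add: algebra_simps)
  qed
  show ?thesis
  proof (cases "C = {}")
    case True
    have "F 0 = ereal (g 0)" by (rule Fg) (use True Dgt g0 in \<open>auto\<close>)
    moreover have "F \<gamma> = ereal (g \<gamma>)" by (rule Fg) (use True Dgt g0 in \<open>auto\<close>)
    moreover have "B = 0" using True B_def by simp
    ultimately have "F 0 < F \<gamma>" using A0 g0 by (simp add: g_def)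
    thus ?thesis by blast
  next
    case False
    define a where "a = Max (L ` C)"
    have aC: "a \<in> L ` C" using False finC a_def by simp
    have aP: "a \<in> L ` P" using aC CP by auto
    have ale: "\<forall>p\<in>C. L p \<le> a" using finC a_def by simp
    have alt: "a < \<gamma>" using aC C_def by auto
    have a0: "a \<ge> 0" using aC CP L0 by auto
    have Cs: "{p\<in>P. L p \<le> a} = C" using ale alt C_def by fastforce
    have B0: "B > 0" unfolding B_def using False finC Al0 CP by (meson subsetD sum_pos)
    have GTa: "GT a = B / A" unfolding GTdef Cs A_def B_def by simp
    define t where "t = B / A"
    have t0: "t > 0" using A0 B0 t_def by simp
    have tin: "t \<in> GT ` L ` P" using aP GTa t_def by (metis image_eqI)
    have Fga: "F \<gamma> = ereal (g \<gamma>)" by (rule Fg) (use ale alt Dgt g0 in \<open>auto\<close>)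
    consider "t < \<gamma>" | "t = \<gamma>" | "t > \<gamma>" by linarith
    then show ?thesis
    proof cases
      case 1
      define y where "y = max a t"
      have "F y = ereal (g y)" by (rule Fg) (use ale alt Dgt g0 t0 1 in \<open>auto simp: y_def\<close>)
      moreover have "g y < g \<gamma>" unfolding g_def using hinc[OF A0 B0, of y \<gamma>] 1 alt t_def y_def by simp
      ultimately have "F y < F \<gamma>" using Fga by simp
      moreover have "y \<in> L ` P \<union> insert 0 (GT ` L ` P)" using aP tin y_def by (auto simp: max_def)
      ultimately show ?thesis by blast
    next
      case 2
      then show ?thesis using tin by simp
    next
      case 3
      define y where "y = (if D = {} then t else min (Min (L ` D)) t)"
      have yD: "\<forall>p\<in>D. y \<le> L p" using finD y_def by (auto simp: min_le_iff_disj)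
      have ygt: "\<gamma> < y" using 3 finD Dgt y_def by auto
      have yt: "y \<le> t" using y_def by auto
      have "F y = ereal (g y)" by (rule Fg) (use ale alt ygt yD g0 in \<open>auto\<close>)
      moreover have "g y < g \<gamma>" unfolding g_def using hdec[OF A0 B0 g0 ygt] yt t_def by simp
      ultimately have "F y < F \<gamma>" using Fga by simp
      moreover have "y \<in> L ` P \<union> insert 0 (GT ` L ` P)"
      proof (cases "D = {}")
        case True then show ?thesis using tin y_def by auto
      next
        case False
        have "Min (L ` D) \<in> L ` P" using False finD D_def by (metis Diff_subset Min_in finite_imageI image_is_empty image_mono subsetD)
        then show ?thesis using tin y_def False by (auto simp: min_def)
      qed
      ultimately show ?thesis by blast
    qed
  qed
qed

lemma abstract_main:
  fixes P :: "'a set" and L Q Al :: "'a \<Rightarrow> real" and e :: real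
    and F :: "real \<Rightarrow> ereal" and GT :: "real \<Rightarrow> real"
  assumes fin: "finite P" and L0: "\<forall>p\<in>P. L p \<ge> 0" and Q0: "\<forall>p\<in>P. Q p \<ge> 0"
    and Al0: "\<forall>p\<in>P. Al p > 0" and e0: "e > 0"
    and Fdef: "\<And>y. F y = (if \<exists>p\<in>P. max (L p) y = 0 then \<infinity>
         else ereal ((\<Sum>p\<in>P. max y (L p) * Q p - Al p * ln (max (L p) y)) + e * y))"
    and GTdef: "\<And>v. GT v = (\<Sum>p\<in>{p\<in>P. L p \<le> v}. Al p) / ((\<Sum>p\<in>{p\<in>P. L p \<le> v}. Q p) + e)"
  shows "(\<exists>\<gamma>0\<ge>0. \<forall>\<gamma>\<ge>0. F \<gamma>0 \<le> F \<gamma>)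
       \<and> (\<forall>\<gamma>0\<ge>0. (\<forall>\<gamma>\<ge>0. F \<gamma>0 \<le> F \<gamma>) \<longrightarrow> \<gamma>0 \<in> L ` P \<union> insert 0 (GT ` L ` P))"
proof -
  define Cand where "Cand = L ` P \<union> insert 0 (GT ` L ` P)"
  have finCand: "finite Cand" using fin Cand_def by simp
  have GT0: "GT v \<ge> 0" for v
  proof -
    have "(\<Sum>p\<in>{p\<in>P. L p \<le> v}. Al p) \<ge> 0" using Al0 by (intro sum_nonneg) (auto intro: less_imp_le)
    moreover have "(\<Sum>p\<in>{p\<in>P. L p \<le> v}. Q p) \<ge> 0" using Q0 by (intro sum_nonneg) auto
    ultimately show ?thesis unfolding GTdef using e0 by simp
  qed
  have Cand0: "\<forall>c\<in>Cand. c \<ge> 0" using L0 GT0 Cand_def by auto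
  have key: "\<gamma> \<in> Cand \<or> (\<exists>c\<in>Cand. F c < F \<gamma>)" if "\<gamma> \<ge> 0" for \<gamma>
  proof (cases "\<gamma> \<in> Cand")
    case False
    then have g0: "\<gamma> > 0" and gN: "\<gamma> \<notin> L ` P" using that Cand_def by auto
    from core[OF fin L0 Q0 Al0 e0 g0 gN Fdef GTdef] show ?thesis unfolding Cand_def by blast
  qed simp
  define m where "m = Min (F ` Cand)"
  have "m \<in> F ` Cand" unfolding m_def using finCand Cand_def by (intro Min_in) auto
  then obtain c0 where c0: "c0 \<in> Cand" "F c0 = m" by blast
  have c0min: "F c0 \<le> F c" if "c \<in> Cand" for c using c0 m_def finCand that by simp
  have part1: "\<forall>\<gamma>\<ge>0. F c0 \<le> F \<gamma>"
  proof (intro allI impI)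
    fix \<gamma> :: real assume "\<gamma> \<ge> 0"
    from key[OF this] show "F c0 \<le> F \<gamma>"
      using c0min by (meson less_imp_le order_trans)
  qed
  have part2: "\<gamma>0 \<in> Cand" if "\<gamma>0 \<ge> 0" "\<forall>\<gamma>\<ge>0. F \<gamma>0 \<le> F \<gamma>" for \<gamma>0
    using key[OF that(1)] that(2) Cand0 by (meson not_le)
  show ?thesis using part1 part2 c0 Cand0 Cand_def by blast
qed

theorem proposition6:
  fixes m1 m2 n :: nat and S :: "nat \<Rightarrow> nat \<Rightarrow> nat \<Rightarrow> real" and \<epsilon> :: real
    and k l :: nat and lam :: "nat \<Rightarrow> nat \<Rightarrow> real"
  assumes "\<epsilon> > 0"
    and "Qplus (m1 * m2) n S"
    and "k \<in> {1..m2}" and "l \<in> {1..m2}" and "l \<le> k"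
    and "\<And>h j. h \<in> {1..m1} \<Longrightarrow> j \<in> {1..m1} \<Longrightarrow> j \<le> h \<Longrightarrow> lam h j \<ge> 0"
  shows "(\<exists>\<gamma>0\<ge>0. \<forall>\<gamma>\<ge>0. objective m1 m2 n S \<epsilon> k l lam \<gamma>0 \<le> objective m1 m2 n S \<epsilon> k l lam \<gamma>)
       \<and> (\<forall>\<gamma>0\<ge>0. (\<forall>\<gamma>\<ge>0. objective m1 m2 n S \<epsilon> k l lam \<gamma>0 \<le> objective m1 m2 n S \<epsilon> k l lam \<gamma>)
              \<longrightarrow> \<gamma>0 \<in> N1 m1 lam \<union> N2 m1 m2 n S \<epsilon> k l lam)"
proof -
  define L where "L = (\<lambda>(h, j). lam h j)"
  define Q where "Q = (\<lambda>(h, j). qcoef m2 n S h k j l)"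
  define Al where "Al = (\<lambda>(h, j). alpha n h k j l)"
  have fin: "finite (pairs m1)"
    by (rule finite_subset[of _ "{1..m1} \<times> {1..m1}"]) (auto simp: pairs_def)
  have L0: "\<forall>p\<in>pairs m1. L p \<ge> 0" using assms(6) by (auto simp: L_def pairs_def)
  have Q0: "\<forall>p\<in>pairs m1. Q p \<ge> 0"
  proof
    fix p assume "p \<in> pairs m1"
    obtain h j where p: "p = (h, j)" by fastforce
    have "0 \<le> max (max \<bar>blk m2 (S 0) h k j l\<bar> \<bar>blk m2 (S 0) h l j k\<bar>)
                   (max \<bar>blk m2 (S 0) j l h k\<bar> \<bar>blk m2 (S 0) j k h l\<bar>)" by simp
    also have "\<dots> \<le> qcoef m2 n S h k j l" unfolding qcoef_def by (rule Max_ge) auto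
    finally show "Q p \<ge> 0" by (simp add: Q_def p)
  qed
  have Al0: "\<forall>p\<in>pairs m1. Al p > 0" by (auto simp: Al_def alpha_def)
  have Fdef: "objective m1 m2 n S \<epsilon> k l lam y = (if \<exists>p\<in>pairs m1. max (L p) y = 0 then \<infinity>
         else ereal ((\<Sum>p\<in>pairs m1. max y (L p) * Q p - Al p * ln (max (L p) y)) + \<epsilon> * y))" for y
    unfolding objective_def L_def Q_def Al_def by (simp add: split_def)
  have GTdef: "gamma_tilde m1 m2 n S \<epsilon> k l lam v = (\<Sum>p\<in>{p\<in>pairs m1. L p \<le> v}. Al p) /
      ((\<Sum>p\<in>{p\<in>pairs m1. L p \<le> v}. Q p) + \<epsilon>)" for v
    unfolding gamma_tilde_def Cset_def L_def Q_def Al_def by (simp add: split_def)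
  have N: "N1 m1 lam \<union> N2 m1 m2 n S \<epsilon> k l lam = L ` pairs m1 \<union> insert 0 (gamma_tilde m1 m2 n S \<epsilon> k l lam ` L ` pairs m1)"
    unfolding N1_def N2_def L_def by simp
  show ?thesis unfolding N
    by (rule abstract_main[OF fin L0 Q0 Al0 assms(1) Fdef GTdef])
qed

end
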